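(* Let $G_1$ and $G_2$ be finite simple graphs with the same number $n\ge 1$ of vertices, and suppose the centers of their Clifford graph algebras have the same dimension: $\dim_{\mathbb{C}} Z(A_{G_1}) = \dim_{\mathbb{C}} Z(A_{G_2})$. Then $A_{G_1}$ and $A_{G_2}$ are isomorphic as $\mathbb{C}$-algebras.
   Context: All graphs are finite, with no loops and no multiple edges. For a graph $G$ with vertices numbered $1,\dots,n$, the Clifford graph algebra $A_G$ is the unital associative $\mathbb{C}$-algebra generated by $e_1,\dots,e_n$ subject to the relations $e_i^2=-1$ for all $i$; $e_ie_j=-e_je_i$ if $i\neq j$ and vertices $i,j$ are adjacent; and $e_ie_j=e_je_i$ if $i\ne j$ and vertices $i,j$ are not adjacent. $Z(A)$ denotes the center of an algebra $A$. *)

theory Defs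
  imports "HOL-Analysis.Analysis" "HOL-Library.Function_Algebras"
begin

definition simple_graph :: "nat \<Rightarrow> (nat \<Rightarrow> nat \<Rightarrow> bool) \<Rightarrow> bool" where
  "simple_graph n E \<longleftrightarrow>
     (\<forall>i\<in>{1..n}. \<forall>j\<in>{1..n}. E i j = E j i) \<and> (\<forall>i\<in>{1..n}. \<not> E i i)"

text \<open>Concrete model of the Clifford graph algebra A_G.  An element is a
  complex-valued function on subsets of {1..n}: the coefficient vector w.r.t. the
  monomial basis e_S = e_(s1) ... e_(sk) (s1 < ... < sk).  The product is forced
  by the defining relations: e_S e_T = sgn(S,T) e_(S symmetric-difference T) with
  sgn(S,T) = (-1)^(#{(i,j) in S x T. j < i, i,j adjacent} + |S inter T|).\<close>

definition clif_carrier :: "nat \<Rightarrow> (nat set \<Rightarrow> complex) set" where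
  "clif_carrier n = {f. \<forall>S. \<not> S \<subseteq> {1..n} \<longrightarrow> f S = 0}"

definition clif_sign :: "(nat \<Rightarrow> nat \<Rightarrow> bool) \<Rightarrow> nat set \<Rightarrow> nat set \<Rightarrow> complex" where
  "clif_sign E S T =
     (-1) ^ (card {(i, j). i \<in> S \<and> j \<in> T \<and> j < i \<and> E i j} + card (S \<inter> T))"

definition clif_basis :: "nat set \<Rightarrow> (nat set \<Rightarrow> complex)" where
  "clif_basis S = (\<lambda>U. if U = S then 1 else 0)"

definition clif_one :: "nat set \<Rightarrow> complex" where
  "clif_one = clif_basis {}"

definition clif_mult ::
  "nat \<Rightarrow> (nat \<Rightarrow> nat \<Rightarrow> bool) \<Rightarrow> (nat set \<Rightarrow> complex) \<Rightarrow> (nat set \<Rightarrow> complex) \<Rightarrow> (nat set \<Rightarrow> complex)" where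
  "clif_mult n E f g =
     (\<lambda>U. if U \<subseteq> {1..n} then
             (\<Sum>S\<in>Pow {1..n}. \<Sum>T\<in>Pow {1..n}.
                if (S - T) \<union> (T - S) = U then clif_sign E S T * f S * g T else 0)
           else 0)"

definition clif_scale :: "complex \<Rightarrow> (nat set \<Rightarrow> complex) \<Rightarrow> (nat set \<Rightarrow> complex)" where
  "clif_scale c f = (\<lambda>S. c * f S)"

definition clif_center :: "nat \<Rightarrow> (nat \<Rightarrow> nat \<Rightarrow> bool) \<Rightarrow> (nat set \<Rightarrow> complex) set" where
  "clif_center n E = {z \<in> clif_carrier n. \<forall>x\<in>clif_carrier n. clif_mult n E z x = clif_mult n E x z}"

definition clif_center_dim :: "nat \<Rightarrow> (nat \<Rightarrow> nat \<Rightarrow> bool) \<Rightarrow> nat" where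
  "clif_center_dim n E = vector_space.dim clif_scale (clif_center n E)"

definition clif_iso :: "nat \<Rightarrow> (nat \<Rightarrow> nat \<Rightarrow> bool) \<Rightarrow> (nat \<Rightarrow> nat \<Rightarrow> bool) \<Rightarrow> bool" where
  "clif_iso n E1 E2 \<longleftrightarrow>
     (\<exists>\<phi>. bij_betw \<phi> (clif_carrier n) (clif_carrier n) \<and>
          (\<forall>x\<in>clif_carrier n. \<forall>y\<in>clif_carrier n. \<phi> (x + y) = \<phi> x + \<phi> y) \<and>
          (\<forall>c. \<forall>x\<in>clif_carrier n. \<phi> (clif_scale c x) = clif_scale c (\<phi> x)) \<and>
          (\<forall>x\<in>clif_carrier n. \<forall>y\<in>clif_carrier n.
              \<phi> (clif_mult n E1 x y) = clif_mult n E2 (\<phi> x) (\<phi> y)) \<and>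
          \<phi> clif_one = clif_one)"

end

theory Submission
  imports Defs
begin


definition sd :: "nat set \<Rightarrow> nat set \<Rightarrow> nat set" where "sd S T = (S - T) \<union> (T - S)"

definition prs :: "(nat \<Rightarrow> nat \<Rightarrow> bool) \<Rightarrow> nat set \<Rightarrow> nat set \<Rightarrow> nat" where
  "prs P S T = (\<Sum>i\<in>S. \<Sum>j\<in>T. of_bool (P i j))"

definition cp :: "(nat \<Rightarrow> nat \<Rightarrow> bool) \<Rightarrow> nat set \<Rightarrow> nat set \<Rightarrow> bool" where
  "cp P S T = odd (prs P S T)"

lemma sum_sd:
  fixes a :: "nat \<Rightarrow> nat"
  assumes "finite S" "finite T"
  shows "sum a S + sum a T = sum a (sd S T) + 2 * sum a (S \<inter> T)"
proof -
  have 1: "sum a S = sum a (S \<inter> T) + sum a (S - T)" using assms by (simp add: sum.Int_Diff)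
  have 2: "sum a T = sum a (S \<inter> T) + sum a (T - S)" using assms sum.Int_Diff[of T a S]
    by (simp add: Int_commute)
  have 3: "sum a (sd S T) = sum a (S - T) + sum a (T - S)" unfolding sd_def
    using assms by (subst sum.union_disjoint) auto
  show ?thesis using 1 2 3 by simp
qed

lemma odd_sd_sum:
  fixes a :: "nat \<Rightarrow> nat"
  assumes "finite S" "finite T"
  shows "odd (sum a (sd S T)) = (odd (sum a S) \<noteq> odd (sum a T))"
proof -
  have "sum a S + sum a T = sum a (sd S T) + 2 * sum a (S \<inter> T)" using sum_sd assms by blast
  then show ?thesis by (metis even_add even_mult_iff even_numeral)
qed

lemma prs_sd1:
  assumes "finite S1" "finite S2"
  shows "odd (prs P (sd S1 S2) T) = (odd (prs P S1 T) \<noteq> odd (prs P S2 T))"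
  unfolding prs_def using odd_sd_sum[OF assms] by blast

lemma prs_sd2:
  assumes "finite T1" "finite T2" "finite S"
  shows "odd (prs P S (sd T1 T2)) = (odd (prs P S T1) \<noteq> odd (prs P S T2))"
proof -
  have "prs P S T1 + prs P S T2 = (\<Sum>i\<in>S. (\<Sum>j\<in>T1. of_bool (P i j)) + (\<Sum>j\<in>T2. of_bool (P i j)))"
    unfolding prs_def by (simp add: sum.distrib)
  also have "\<dots> = (\<Sum>i\<in>S. (\<Sum>j\<in>sd T1 T2. of_bool (P i j)) + 2 * (\<Sum>j\<in>T1 \<inter> T2. of_bool (P i j)))"
    using sum_sd[OF assms(1,2)] by simp
  also have "\<dots> = prs P S (sd T1 T2) + 2 * prs P S (T1 \<inter> T2)"
    unfolding prs_def by (simp add: sum.distrib sum_distrib_left)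
  finally show ?thesis by (metis even_add even_mult_iff even_numeral)
qed

lemma odd_sum_ofbool:
  fixes a :: "nat \<Rightarrow> nat"
  assumes "finite S"
  shows "odd (\<Sum>i\<in>S. of_bool (odd (a i)) :: nat) = odd (sum a S)"
  using assms
proof (induction S rule: finite_induct)
  case empty then show ?case by simp
next
  case (insert x F)
  have "(\<Sum>i\<in>insert x F. of_bool (odd (a i)) :: nat) = of_bool (odd (a x)) + (\<Sum>i\<in>F. of_bool (odd (a i)))"
    by (rule sum.insert[OF insert(1,2)])
  moreover have "sum a (insert x F) = a x + sum a F" using insert by simp
  ultimately show ?case using insert.IH by simp
qed

lemma sd_empty[simp]: "sd {} {} = {}" "sd S {} = S" "sd {} S = S" "sd S S = {}"
  unfolding sd_def by auto

lemma xor_add_expand: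
  assumes F: "\<forall>X\<in>Pow {1..n}. \<forall>Y\<in>Pow {1..n}. F (sd X Y) = (F X \<noteq> F Y)"
    and X: "X \<subseteq> {1..n}"
  shows "F X = odd (\<Sum>i\<in>X. of_bool (F {i}) :: nat)"
proof -
  have fin: "finite X" using X finite_subset by blast
  have F0: "F {} = False" using F[rule_format, of "{}" "{}"] by simp
  show ?thesis using fin X
  proof (induction X rule: finite_induct)
    case empty then show ?case using F0 by simp
  next
    case (insert x X)
    have e: "insert x X = sd X {x}" unfolding sd_def using insert by auto
    have "F (insert x X) = (F X \<noteq> F {x})" unfolding e using F insert by auto
    then show ?case using insert by auto
  qed
qed

definition bil :: "nat \<Rightarrow> (nat set \<Rightarrow> nat set \<Rightarrow> bool) \<Rightarrow> bool" where
  "bil n B \<longleftrightarrow> (\<forall>X\<in>Pow {1..n}. \<forall>Y\<in>Pow {1..n}. \<forall>T\<in>Pow {1..n}.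
      B (sd X Y) T = (B X T \<noteq> B Y T) \<and> B T (sd X Y) = (B T X \<noteq> B T Y))"

lemma bil_expand:
  assumes "bil n B" "S \<subseteq> {1..n}" "T \<subseteq> {1..n}"
  shows "B S T = odd (prs (\<lambda>i j. B {i} {j}) S T)"
proof -
  have 1: "B S T = odd (\<Sum>i\<in>S. of_bool (B {i} T) :: nat)"
    using xor_add_expand[of n "\<lambda>X. B X T" S] assms unfolding bil_def by auto
  have 2: "B {i} T = odd (\<Sum>j\<in>T. of_bool (B {i} {j}) :: nat)" if "i \<in> S" for i
    using xor_add_expand[of n "\<lambda>Y. B {i} Y" T] assms that unfolding bil_def by auto
  have "B S T = odd (\<Sum>i\<in>S. of_bool (odd (\<Sum>j\<in>T. of_bool (B {i} {j}) :: nat)) :: nat)"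
  proof -
    have "(\<Sum>i\<in>S. of_bool (B {i} T) :: nat) = (\<Sum>i\<in>S. of_bool (odd (\<Sum>j\<in>T. of_bool (B {i} {j}) :: nat)))"
      by (rule sum.cong[OF refl]) (simp only: 2)
    then show ?thesis using 1 by simp
  qed
  also have "\<dots> = odd (prs (\<lambda>i j. B {i} {j}) S T)"
    unfolding prs_def by (rule odd_sum_ofbool) (use assms finite_subset in blast)
  finally show ?thesis .
qed



lemma card_pairs:
  assumes "finite S" "finite T"
  shows "card {(i, j). i \<in> S \<and> j \<in> T \<and> P i j} = prs P S T"
proof -
  have e: "{(i, j). i \<in> S \<and> j \<in> T \<and> P i j} = (SIGMA i:S. {j\<in>T. P i j})" by auto
  have "card (SIGMA i:S. {j\<in>T. P i j}) = (\<Sum>i\<in>S. card {j\<in>T. P i j})"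
    using assms by (subst card_SigmaI) auto
  also have "\<dots> = prs P S T" unfolding prs_def using assms
    by (intro sum.cong refl) (simp add: Int_def conj_commute)
  finally show ?thesis using e by simp
qed

definition Mc :: "(nat \<Rightarrow> nat \<Rightarrow> bool) \<Rightarrow> nat \<Rightarrow> nat \<Rightarrow> bool" where
  "Mc E i j = ((j < i \<and> E i j) \<or> i = j)"

lemma prs_cong:
  assumes "\<And>i j. i \<in> S \<Longrightarrow> j \<in> T \<Longrightarrow> P i j = Q i j"
  shows "prs P S T = prs Q S T"
  unfolding prs_def using assms by (intro sum.cong refl) auto

lemma prs_eq: "finite S \<Longrightarrow> finite T \<Longrightarrow> prs (\<lambda>i j. i = j) S T = card (S \<inter> T)"
proof -
  assume f: "finite S" "finite T"
  have "(\<Sum>j\<in>T. of_bool (i = j) :: nat) = of_bool (i \<in> T)" for i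
    using f by (simp add: of_bool_def)
  then have "prs (\<lambda>i j. i = j) S T = (\<Sum>i\<in>S. of_bool (i \<in> T))" unfolding prs_def by simp
  also have "\<dots> = card (S \<inter> T)" using f by (simp add: Int_def)
  finally show ?thesis .
qed

lemma of_bool_disj: "\<not> (P \<and> Q) \<Longrightarrow> (of_bool (P \<or> Q) :: nat) = of_bool P + of_bool Q"
  by (cases P; cases Q) auto

lemma sign_prs:
  assumes "finite S" "finite T"
  shows "clif_sign E S T = (-1) ^ prs (Mc E) S T"
proof -
  have "prs (Mc E) S T = (\<Sum>i\<in>S. \<Sum>j\<in>T. of_bool (j < i \<and> E i j) + of_bool (i = j))"
    unfolding prs_def Mc_def by (intro sum.cong refl of_bool_disj) auto
  also have "\<dots> = prs (\<lambda>i j. j < i \<and> E i j) S T + prs (\<lambda>i j. i = j) S T"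
    unfolding prs_def by (simp only: sum.distrib)
  also have "\<dots> = card {(i, j). i \<in> S \<and> j \<in> T \<and> j < i \<and> E i j} + card (S \<inter> T)"
    using assms card_pairs[of S T "\<lambda>i j. j < i \<and> E i j"] prs_eq[of S T] by (simp only:)
  finally have eq: "prs (Mc E) S T = card {(i, j). i \<in> S \<and> j \<in> T \<and> j < i \<and> E i j} + card (S \<inter> T)" .
  show ?thesis unfolding clif_sign_def eq by (rule refl)
qed

lemma prs_swap: "prs P T S = prs (\<lambda>i j. P j i) S T"
  unfolding prs_def by (fact sum.swap[where g="\<lambda>i j. of_bool (P i j)" and A=T and B=S])


lemma sign_comm:
  assumes E: "simple_graph n E" and S: "S \<subseteq> {1..n}" and T: "T \<subseteq> {1..n}"
  shows "(clif_sign E S T = clif_sign E T S) = (\<not> cp E S T)"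
proof -
  have fS: "finite S" and fT: "finite T" using S T finite_subset by blast+
  have pw: "of_bool (Mc E i j) + of_bool (Mc E j i) = of_bool (E i j) + 2 * (of_bool (i = j) :: nat)"
    if "i \<in> S" "j \<in> T" for i j
  proof -
    have ij: "i \<in> {1..n}" "j \<in> {1..n}" using that S T by auto
    have "E i j = E j i" "\<not> E i i" using E ij unfolding simple_graph_def by auto
    then show ?thesis unfolding Mc_def by (cases "i < j"; cases "j < i"; auto)
  qed
  have "prs (Mc E) S T + prs (Mc E) T S = (\<Sum>i\<in>S. \<Sum>j\<in>T. of_bool (Mc E i j) + of_bool (Mc E j i))"
    unfolding prs_swap[of "Mc E" T S] unfolding prs_def by (simp only: sum.distrib)
  also have "\<dots> = (\<Sum>i\<in>S. \<Sum>j\<in>T. of_bool (E i j) + 2 * of_bool (i = j))"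
    using pw by (intro sum.cong refl) auto
  also have "\<dots> = prs E S T + 2 * prs (\<lambda>i j. i = j) S T"
    unfolding prs_def by (simp only: sum.distrib sum_distrib_left)
  finally have eq: "prs (Mc E) S T + prs (Mc E) T S = prs E S T + 2 * prs (\<lambda>i j. i = j) S T" .
  have "(clif_sign E S T = clif_sign E T S) = (even (prs (Mc E) S T) = even (prs (Mc E) T S))"
    unfolding sign_prs[OF fS fT] sign_prs[OF fT fS] by (simp add: minus_one_power_iff)
  also have "\<dots> = even (prs E S T)" using eq by (metis even_add even_mult_iff even_numeral)
  finally show ?thesis unfolding cp_def by simp
qed



lemma sd_comm: "sd S T = sd T S" unfolding sd_def by auto
lemma sd_eq_iff: "(sd S T = U) = (S = sd U T)" unfolding sd_def by auto
lemma sd_sub: "S \<subseteq> A \<Longrightarrow> T \<subseteq> A \<Longrightarrow> sd S T \<subseteq> A" unfolding sd_def by auto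

lemma clif_basis_apply: "clif_basis S U = (if U = S then 1 else 0)"
  by (simp add: clif_basis_def)

lemma clif_mult_sd: "clif_mult n E f g =
     (\<lambda>U. if U \<subseteq> {1..n} then
             (\<Sum>S\<in>Pow {1..n}. \<Sum>T\<in>Pow {1..n}.
                if sd S T = U then clif_sign E S T * f S * g T else 0)
           else 0)"
  unfolding clif_mult_def sd_def ..

lemma mult_basis_right:
  assumes T: "T \<subseteq> {1..n}"
  shows "clif_mult n E z (clif_basis T) U =
    (if U \<subseteq> {1..n} then clif_sign E (sd U T) T * z (sd U T) else 0)"
proof (cases "U \<subseteq> {1..n}")
  case True
  have "(\<Sum>T'\<in>Pow {1..n}. if sd S T' = U then clif_sign E S T' * z S * clif_basis T T' else 0)
      = (if sd S T = U then clif_sign E S T * z S else 0)" for S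
  proof -
    have "(\<Sum>T'\<in>Pow {1..n}. if sd S T' = U then clif_sign E S T' * z S * clif_basis T T' else 0)
        = (\<Sum>T'\<in>Pow {1..n}. if T' = T then (if sd S T = U then clif_sign E S T * z S else 0) else 0)"
      by (intro sum.cong refl) (auto simp: clif_basis_def)
    also have "\<dots> = (if sd S T = U then clif_sign E S T * z S else 0)" using T by simp
    finally show ?thesis .
  qed
  then have "clif_mult n E z (clif_basis T) U =
      (\<Sum>S\<in>Pow {1..n}. if S = sd U T then clif_sign E S T * z S else 0)"
    unfolding clif_mult_sd using True by (simp add: sd_eq_iff)
  also have "\<dots> = clif_sign E (sd U T) T * z (sd U T)"
    using True T sd_sub[of U "{1..n}" T] by simp
  finally show ?thesis using True by simp
qed (simp add: clif_mult_sd)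

lemma mult_basis_left:
  assumes T: "T \<subseteq> {1..n}"
  shows "clif_mult n E (clif_basis T) z U =
    (if U \<subseteq> {1..n} then clif_sign E T (sd T U) * z (sd T U) else 0)"
proof (cases "U \<subseteq> {1..n}")
  case True
  have "(\<Sum>S\<in>Pow {1..n}. \<Sum>T'\<in>Pow {1..n}. if sd S T' = U then clif_sign E S T' * clif_basis T S * z T' else 0)
      = (\<Sum>S\<in>Pow {1..n}. if S = T then (\<Sum>T'\<in>Pow {1..n}. if sd T T' = U then clif_sign E T T' * z T' else 0) else 0)"
  proof (intro sum.cong refl)
    fix S
    show "(\<Sum>T'\<in>Pow {1..n}. if sd S T' = U then clif_sign E S T' * clif_basis T S * z T' else 0)
      = (if S = T then (\<Sum>T'\<in>Pow {1..n}. if sd T T' = U then clif_sign E T T' * z T' else 0) else 0)"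
      unfolding clif_basis_apply by (cases "S = T") (simp_all cong: if_cong)
  qed
  also have "\<dots> = (\<Sum>T'\<in>Pow {1..n}. if sd T T' = U then clif_sign E T T' * z T' else 0)"
    using T by simp
  also have "\<dots> = (\<Sum>T'\<in>Pow {1..n}. if T' = sd T U then clif_sign E T T' * z T' else 0)"
    by (intro sum.cong refl) (auto simp: sd_def)
  also have "\<dots> = clif_sign E T (sd T U) * z (sd T U)"
    using True T sd_sub[of T "{1..n}" U] by simp
  finally show ?thesis unfolding clif_mult_sd using True by simp
qed (simp add: clif_mult_sd)

definition rad :: "nat \<Rightarrow> (nat \<Rightarrow> nat \<Rightarrow> bool) \<Rightarrow> nat set set" where
  "rad n E = {S. S \<subseteq> {1..n} \<and> (\<forall>T. T \<subseteq> {1..n} \<longrightarrow> \<not> cp E S T)}"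

lemma center_eq:
  assumes E: "simple_graph n E"
  shows "clif_center n E = {z \<in> clif_carrier n. \<forall>S. z S \<noteq> 0 \<longrightarrow> S \<in> rad n E}"
proof (intro set_eqI iffI)
  fix z assume z: "z \<in> clif_center n E"
  then have zc: "z \<in> clif_carrier n" unfolding clif_center_def by auto
  have "S \<in> rad n E" if "z S \<noteq> 0" for S
  proof -
    have S: "S \<subseteq> {1..n}" using zc that unfolding clif_carrier_def by auto
    have "\<not> cp E S T" if T: "T \<subseteq> {1..n}" for T
    proof -
      have bc: "clif_basis T \<in> clif_carrier n" using T unfolding clif_carrier_def clif_basis_def by auto
      have eq: "clif_mult n E z (clif_basis T) = clif_mult n E (clif_basis T) z"
        using z bc unfolding clif_center_def by auto
      let ?U = "sd S T"
      have U: "?U \<subseteq> {1..n}" using S T by (rule sd_sub)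
      have e1: "sd ?U T = S" "sd T ?U = S" unfolding sd_def by auto
      have "clif_mult n E z (clif_basis T) ?U = clif_mult n E (clif_basis T) z ?U" using eq by simp
      then have "clif_sign E S T * z S = clif_sign E T S * z S"
        unfolding mult_basis_right[OF T] mult_basis_left[OF T] using U e1 by simp
      then have "clif_sign E S T = clif_sign E T S" using \<open>z S \<noteq> 0\<close> by simp
      then show ?thesis using sign_comm[OF E S T] by simp
    qed
    then show ?thesis unfolding rad_def using S by auto
  qed
  then show "z \<in> {z \<in> clif_carrier n. \<forall>S. z S \<noteq> 0 \<longrightarrow> S \<in> rad n E}" using zc by auto
next
  fix z assume z: "z \<in> {z \<in> clif_carrier n. \<forall>S. z S \<noteq> 0 \<longrightarrow> S \<in> rad n E}"
  then have zc: "z \<in> clif_carrier n" and zr: "\<And>S. z S \<noteq> 0 \<Longrightarrow> S \<in> rad n E" by auto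
  have "clif_mult n E z x = clif_mult n E x z" if x: "x \<in> clif_carrier n" for x
  proof
    fix U
    have "(\<Sum>S\<in>Pow {1..n}. \<Sum>T\<in>Pow {1..n}. if sd S T = U then clif_sign E S T * x S * z T else 0)
       = (\<Sum>T\<in>Pow {1..n}. \<Sum>S\<in>Pow {1..n}. if sd S T = U then clif_sign E S T * x S * z T else 0)"
      by (rule sum.swap)
    also have "\<dots> = (\<Sum>S\<in>Pow {1..n}. \<Sum>T\<in>Pow {1..n}. if sd S T = U then clif_sign E S T * z S * x T else 0)"
    proof (intro sum.cong refl)
      fix S T assume S: "S \<in> Pow {1..n}" and T: "T \<in> Pow {1..n}"
      show "(if sd T S = U then clif_sign E T S * x T * z S else 0) =
            (if sd S T = U then clif_sign E S T * z S * x T else 0)"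
      proof (cases "z S = 0")
        case False
        then have "S \<in> rad n E" by (rule zr)
        then have "\<not> cp E S T" using T unfolding rad_def by auto
        then have "clif_sign E S T = clif_sign E T S" using sign_comm[OF E, of S T] S T by auto
        then show ?thesis by (simp add: sd_comm)
      qed simp
    qed
    finally show "clif_mult n E z x U = clif_mult n E x z U"
      unfolding clif_mult_sd by simp
  qed
  then show "z \<in> clif_center n E" unfolding clif_center_def using zc by auto
qed

lemma fun_sum_apply: "(sum f A) x = (\<Sum>a\<in>A. f a x)"
  by (induction A rule: infinite_finite_induct) auto

interpretation cv: vector_space clif_scale
  by unfold_locales (auto simp: clif_scale_def fun_eq_iff algebra_simps)

lemma center_dim:
  assumes E: "simple_graph n E"
  shows "clif_center_dim n E = card (rad n E)"
proof -
  let ?V = "{z \<in> clif_carrier n. \<forall>S. z S \<noteq> 0 \<longrightarrow> S \<in> rad n E}"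
  let ?B = "clif_basis ` rad n E"
  have finR: "finite (rad n E)" unfolding rad_def by (rule finite_subset[of _ "Pow {1..n}"]) auto
  have injb: "inj clif_basis"
  proof (rule injI)
    fix x y assume "clif_basis x = clif_basis y"
    then have "clif_basis x x = clif_basis y x" by simp
    then show "x = y" by (simp add: clif_basis_def split: if_splits)
  qed
  have "cv.dim ?V = card (rad n E)"
  proof (rule cv.dim_unique)
    show "?B \<subseteq> ?V" unfolding clif_basis_def clif_carrier_def rad_def by (auto split: if_splits)
    show "card ?B = card (rad n E)" using injb by (simp add: card_image inj_on_subset)
    show "?V \<subseteq> cv.span ?B"
    proof
      fix z assume z: "z \<in> ?V"
      have "z = (\<Sum>S\<in>rad n E. clif_scale (z S) (clif_basis S))"
      proof
        fix U
        have "(\<Sum>S\<in>rad n E. clif_scale (z S) (clif_basis S)) U = (\<Sum>S\<in>rad n E. if U = S then z S else 0)"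
          unfolding fun_sum_apply clif_scale_def clif_basis_def by (intro sum.cong refl) auto
        also have "\<dots> = z U" using finR z by auto
        finally show "z U = (\<Sum>S\<in>rad n E. clif_scale (z S) (clif_basis S)) U" by simp
      qed
      also have "\<dots> \<in> cv.span ?B"
        by (intro cv.span_sum cv.span_scale cv.span_base) auto
      finally show "z \<in> cv.span ?B" .
    qed
    show "cv.independent ?B"
    proof (rule cv.independent_if_scalars_zero)
      show "finite ?B" using finR by simp
      fix f x assume s: "(\<Sum>x\<in>?B. clif_scale (f x) x) = 0" and x: "x \<in> ?B"
      then obtain S where S: "S \<in> rad n E" and xS: "x = clif_basis S" by auto
      have "0 = (\<Sum>y\<in>?B. clif_scale (f y) y) S" using s by simp
      also have "\<dots> = (\<Sum>y\<in>?B. if y = x then f y else 0)"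
        unfolding fun_sum_apply
      proof (intro sum.cong refl)
        fix y assume "y \<in> ?B"
        then obtain T where yT: "y = clif_basis T" by auto
        have "(y = x) = (T = S)" using injb xS yT by (auto dest: injD)
        then show "clif_scale (f y) y S = (if y = x then f y else 0)"
          using yT by (simp add: clif_scale_def clif_basis_apply)
      qed
      also have "\<dots> = f x" using x finR by simp
      finally show "f x = 0" by simp
    qed
  qed
  then show ?thesis unfolding clif_center_dim_def center_eq[OF E] .
qed



lemma prs_union1:
  assumes "finite X" "finite Y" "X \<inter> Y = {}"
  shows "prs P (X \<union> Y) Z = prs P X Z + prs P Y Z"
  unfolding prs_def using assms by (rule sum.union_disjoint)

lemma prs_union2:
  assumes "finite X" "finite Y" "X \<inter> Y = {}"
  shows "prs P Z (X \<union> Y) = prs P Z X + prs P Z Y"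
proof -
  have "(\<Sum>j\<in>X \<union> Y. of_bool (P i j) :: nat) = (\<Sum>j\<in>X. of_bool (P i j)) + (\<Sum>j\<in>Y. of_bool (P i j))" for i
    by (rule sum.union_disjoint[OF assms])
  then show ?thesis unfolding prs_def by (simp only: sum.distrib)
qed

lemma i_pow_mod4: "\<i> ^ (a + 4 * k) = (\<i> ^ a :: complex)"
proof -
  have "\<i> ^ (4 * k) = (1::complex)"
    by (simp add: power_mult[symmetric] power_mult)
  then show ?thesis by (simp add: power_add)
qed

lemma cobound:
  assumes B: "bil n B" and symB: "\<forall>S\<in>Pow {1..n}. \<forall>T\<in>Pow {1..n}. B S T = B T S"
  shows "\<exists>lam. (\<forall>S\<in>Pow {1..n}. lam S \<noteq> (0::complex)) \<and>
     (\<forall>S\<in>Pow {1..n}. \<forall>T\<in>Pow {1..n}. (if B S T then -1 else 1) * lam (sd S T) = lam S * lam T)"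
proof -
  define d where "d i j = B {i} {j}" for i j
  define N where "N = prs d"
  have Nsym: "N X Y = N Y X" if "X \<subseteq> {1..n}" "Y \<subseteq> {1..n}" for X Y
  proof -
    have "N Y X = prs (\<lambda>i j. d j i) X Y" unfolding N_def by (rule prs_swap)
    also have "\<dots> = N X Y" unfolding N_def
      by (rule prs_cong) (use that symB in \<open>auto simp: d_def\<close>)
    finally show ?thesis by simp
  qed
  have BN: "B S T = odd (N S T)" if "S \<subseteq> {1..n}" "T \<subseteq> {1..n}" for S T
    unfolding N_def d_def using bil_expand[OF B that] .
  define lam where "lam S = \<i> ^ N S S" for S
  have key: "N (sd S T) (sd S T) + 2 * N S T = N S S + N T T + 4 * N (S - T) (T - S)"
    if S: "S \<subseteq> {1..n}" and T: "T \<subseteq> {1..n}" for S T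
  proof -
    let ?A = "S - T" and ?C = "S \<inter> T" and ?D = "T - S"
    have fA: "finite ?A" and fC: "finite ?C" and fD: "finite ?D"
      using S T finite_subset by blast+
    have sA: "?A \<subseteq> {1..n}" and sC: "?C \<subseteq> {1..n}" and sD: "?D \<subseteq> {1..n}" using S T by auto
    have eS: "S = ?A \<union> ?C" and eT: "T = ?C \<union> ?D" and eU: "sd S T = ?A \<union> ?D" unfolding sd_def by auto
    have d1: "?A \<inter> ?C = {}" "?C \<inter> ?D = {}" "?A \<inter> ?D = {}" by auto
    have u1: "N (X \<union> Y) Z = N X Z + N Y Z" if "finite X" "finite Y" "X \<inter> Y = {}" for X Y Z
      unfolding N_def using that by (rule prs_union1)
    have u2: "N Z (X \<union> Y) = N Z X + N Z Y" if "finite X" "finite Y" "X \<inter> Y = {}" for X Y Z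
      unfolding N_def using that by (rule prs_union2)
    have QS: "N S S = N ?A ?A + N ?A ?C + N ?C ?A + N ?C ?C"
      by (subst (1 2) eS) (simp add: u1 u2 fA fC d1)
    have QT: "N T T = N ?C ?C + N ?C ?D + N ?D ?C + N ?D ?D"
      by (subst (1 2) eT) (simp add: u1 u2 fC fD d1)
    have QU: "N (sd S T) (sd S T) = N ?A ?A + N ?A ?D + N ?D ?A + N ?D ?D"
      unfolding eU by (simp add: u1 u2 fA fD d1)
    have NST: "N S T = N ?A ?C + N ?A ?D + N ?C ?C + N ?C ?D"
      by (subst eS, subst eT) (simp add: u1 u2 fA fC fD d1)
    have s1: "N ?C ?A = N ?A ?C" "N ?D ?C = N ?C ?D" "N ?D ?A = N ?A ?D"
      using Nsym sA sC sD by auto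
    show ?thesis using QS QT QU NST s1 by simp
  qed
  show ?thesis
  proof (intro exI conjI ballI)
    fix S assume "S \<in> Pow {1..n}" show "lam S \<noteq> 0" unfolding lam_def by simp
  next
    fix S T assume S: "S \<in> Pow {1..n}" and T: "T \<in> Pow {1..n}"
    have sg: "(if B S T then -1 else 1) = (\<i> ^ (2 * N S T) :: complex)"
      using BN[of S T] S T by (simp add: power_mult minus_one_power_iff)
    have "(if B S T then -1 else 1) * lam (sd S T) = \<i> ^ (N (sd S T) (sd S T) + 2 * N S T)"
      unfolding sg lam_def by (simp add: power_add)
    also have "\<dots> = \<i> ^ (N S S + N T T + 4 * N (S - T) (T - S))" using key S T by simp
    also have "\<dots> = lam S * lam T" unfolding lam_def i_pow_mod4 by (simp add: power_add)
    finally show "(if B S T then -1 else 1) * lam (sd S T) = lam S * lam T" .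
  qed
qed



lemma iso_from_cocycle:
  assumes f: "bij_betw f (Pow {1..n}) (Pow {1..n})"
    and lin: "\<forall>S\<in>Pow {1..n}. \<forall>T\<in>Pow {1..n}. f (sd S T) = sd (f S) (f T)"
    and lam: "\<forall>S\<in>Pow {1..n}. lam S \<noteq> 0"
    and coc: "\<forall>S\<in>Pow {1..n}. \<forall>T\<in>Pow {1..n}.
       clif_sign E1 S T * lam (sd S T) = lam S * lam T * clif_sign E2 (f S) (f T)"
  shows "clif_iso n E1 E2"
proof -
  let ?P = "Pow {1..n}"
  define h where "h = the_inv_into ?P f"
  have hb: "bij_betw h ?P ?P" unfolding h_def by (rule bij_betw_the_inv_into[OF f])
  have fh: "f (h U) = U" if "U \<in> ?P" for U
    unfolding h_def using f_the_inv_into_f_bij_betw[OF f] that by blast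
  have injf: "inj_on f ?P" using f by (simp add: bij_betw_def)
  have hf: "h (f S) = S" if "S \<in> ?P" for S
    unfolding h_def using the_inv_into_f_f[OF injf that] .
  have fP: "f S \<in> ?P" if "S \<in> ?P" for S by (rule bij_betw_apply[OF f that])
  have hP: "h U \<in> ?P" if "U \<in> ?P" for U by (rule bij_betw_apply[OF hb that])
  have f0: "f {} = {}"
  proof -
    have "f (sd {} {}) = sd (f {}) (f {})" by (rule lin[rule_format]) auto
    then show ?thesis by simp
  qed
  have lam0: "lam {} = 1"
  proof -
    have "clif_sign E1 {} {} * lam (sd {} {}) = lam {} * lam {} * clif_sign E2 (f {}) (f {})"
      by (rule coc[rule_format]) auto
    then have "lam {} = lam {} * lam {}" unfolding f0 by (simp add: clif_sign_def)
    then show ?thesis using lam by auto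
  qed
  define phi where "phi x = (\<lambda>U. if U \<subseteq> {1..n} then lam (h U) * x (h U) else 0)" for x :: "nat set \<Rightarrow> complex"
  define psi where "psi y = (\<lambda>S. if S \<subseteq> {1..n} then y (f S) / lam S else 0)" for y :: "nat set \<Rightarrow> complex"
  have phiC: "phi x \<in> clif_carrier n" for x unfolding phi_def clif_carrier_def by auto
  have psiC: "psi x \<in> clif_carrier n" for x unfolding psi_def clif_carrier_def by auto
  have bij: "bij_betw phi (clif_carrier n) (clif_carrier n)"
  proof (rule bij_betw_byWitness[where f'=psi])
    show "\<forall>a\<in>clif_carrier n. psi (phi a) = a"
    proof
      fix x assume x: "x \<in> clif_carrier n"
      show "psi (phi x) = x"
      proof
        fix S show "psi (phi x) S = x S"
        proof (cases "S \<subseteq> {1..n}")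
          case True
          then show ?thesis unfolding psi_def phi_def using fP hf lam by auto
        next
          case False then show ?thesis using x unfolding psi_def clif_carrier_def by auto
        qed
      qed
    qed
    show "\<forall>a\<in>clif_carrier n. phi (psi a) = a"
    proof
      fix y assume y: "y \<in> clif_carrier n"
      show "phi (psi y) = y"
      proof
        fix U show "phi (psi y) U = y U"
        proof (cases "U \<subseteq> {1..n}")
          case True
          then have "h U \<subseteq> {1..n}" using hP by auto
          then show ?thesis unfolding psi_def phi_def using True fh lam hP by auto
        next
          case False then show ?thesis using y unfolding phi_def clif_carrier_def by auto
        qed
      qed
    qed
  qed (use phiC psiC in auto)
  have add: "phi (x + y) = phi x + phi y" for x y
    unfolding phi_def by (auto simp: fun_eq_iff algebra_simps)
  have scale: "phi (clif_scale c x) = clif_scale c (phi x)" for c x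
    unfolding phi_def clif_scale_def by (auto simp: fun_eq_iff algebra_simps)
  have one: "phi clif_one = clif_one"
  proof
    fix U
    show "phi clif_one U = clif_one U"
    proof (cases "U \<subseteq> {1..n}")
      case True
      have "(h U = {}) = (U = {})"
        using hf[of "{}"] fh[OF True[folded Pow_iff]] f0 by auto
      then show ?thesis unfolding phi_def clif_one_def clif_basis_apply using True lam0 by auto
    next
      case False then show ?thesis unfolding phi_def clif_one_def clif_basis_apply by auto
    qed
  qed
  have mult: "phi (clif_mult n E1 x y) = clif_mult n E2 (phi x) (phi y)" for x y
  proof
    fix U
    show "phi (clif_mult n E1 x y) U = clif_mult n E2 (phi x) (phi y) U"
    proof (cases "U \<subseteq> {1..n}")
      case False then show ?thesis unfolding phi_def clif_mult_sd by simp
    next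
      case True
      then have UP: "U \<in> ?P" by simp
      have "clif_mult n E2 (phi x) (phi y) U =
          (\<Sum>S'\<in>?P. \<Sum>T'\<in>?P. if sd S' T' = U then clif_sign E2 S' T' * phi x S' * phi y T' else 0)"
        unfolding clif_mult_sd using True by simp
      also have "\<dots> = (\<Sum>S\<in>?P. \<Sum>T'\<in>?P. if sd (f S) T' = U then clif_sign E2 (f S) T' * phi x (f S) * phi y T' else 0)"
        by (rule sum.reindex_bij_betw[OF f, symmetric])
      also have "\<dots> = (\<Sum>S\<in>?P. \<Sum>T\<in>?P. if sd (f S) (f T) = U then clif_sign E2 (f S) (f T) * phi x (f S) * phi y (f T) else 0)"
        by (intro sum.cong refl sum.reindex_bij_betw[OF f, symmetric])
      also have "\<dots> = (\<Sum>S\<in>?P. \<Sum>T\<in>?P. lam (h U) * (if sd S T = h U then clif_sign E1 S T * x S * y T else 0))"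
      proof (intro sum.cong refl)
        fix S T assume S: "S \<in> ?P" and T: "T \<in> ?P"
        have sdP: "sd S T \<in> ?P" using S T sd_sub by auto
        have lST: "sd (f S) (f T) = f (sd S T)" using lin[rule_format, OF S T] by simp
        have c: "(sd (f S) (f T) = U) = (sd S T = h U)"
        proof
          assume "sd (f S) (f T) = U"
          then have "f (sd S T) = U" using lST by simp
          then show "sd S T = h U" using hf[OF sdP] by auto
        next
          assume "sd S T = h U"
          then show "sd (f S) (f T) = U" using lST fh[OF UP] by simp
        qed
        have px: "phi x (f S) = lam S * x S" unfolding phi_def using fP[OF S] hf[OF S] by auto
        have py: "phi y (f T) = lam T * y T" unfolding phi_def using fP[OF T] hf[OF T] by auto
        show "(if sd (f S) (f T) = U then clif_sign E2 (f S) (f T) * phi x (f S) * phi y (f T) else 0) =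
            lam (h U) * (if sd S T = h U then clif_sign E1 S T * x S * y T else 0)"
        proof (cases "sd S T = h U")
          case True
          have "clif_sign E1 S T * lam (sd S T) = lam S * lam T * clif_sign E2 (f S) (f T)"
            using coc S T by auto
          then show ?thesis unfolding c px py using True by (simp add: algebra_simps)
        next
          case False then show ?thesis unfolding c by simp
        qed
      qed
      also have "\<dots> = phi (clif_mult n E1 x y) U"
        unfolding phi_def clif_mult_sd using True hP[OF UP] by (simp add: sum_distrib_left)
      finally show ?thesis by simp
    qed
  qed
  show ?thesis unfolding clif_iso_def
    by (intro exI[of _ phi] conjI ballI allI bij add scale mult one)
qed

definition lin :: "nat \<Rightarrow> (nat set \<Rightarrow> nat set) \<Rightarrow> bool" where
  "lin n f \<longleftrightarrow> (\<forall>S\<in>Pow {1..n}. \<forall>T\<in>Pow {1..n}. f (sd S T) = sd (f S) (f T))"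

definition eqv :: "nat \<Rightarrow> (nat \<Rightarrow> nat \<Rightarrow> bool) \<Rightarrow> (nat \<Rightarrow> nat \<Rightarrow> bool) \<Rightarrow> bool" where
  "eqv n E1 E2 \<longleftrightarrow> (\<exists>f. bij_betw f (Pow {1..n}) (Pow {1..n}) \<and> lin n f \<and>
      (\<forall>S\<in>Pow {1..n}. \<forall>T\<in>Pow {1..n}. cp E1 S T = cp E2 (f S) (f T)))"

lemma Mc_comm:
  assumes E: "simple_graph n E" and S: "S \<subseteq> {1..n}" and T: "T \<subseteq> {1..n}"
  shows "(odd (prs (Mc E) S T) \<noteq> odd (prs (Mc E) T S)) = cp E S T"
proof -
  have fS: "finite S" and fT: "finite T" using S T finite_subset by blast+
  have "((-1::complex) ^ prs (Mc E) S T = (-1) ^ prs (Mc E) T S) = (\<not> cp E S T)"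
    using sign_comm[OF E S T] unfolding sign_prs[OF fS fT] sign_prs[OF fT fS] .
  then show ?thesis by (simp add: minus_one_power_iff split: if_splits)
qed

lemma eqv_iso:
  assumes E1: "simple_graph n E1" and E2: "simple_graph n E2" and eq: "eqv n E1 E2"
  shows "clif_iso n E1 E2"
proof -
  obtain f where f: "bij_betw f (Pow {1..n}) (Pow {1..n})" and lf: "lin n f"
    and c: "\<forall>S\<in>Pow {1..n}. \<forall>T\<in>Pow {1..n}. cp E1 S T = cp E2 (f S) (f T)"
    using eq unfolding eqv_def by blast
  have fP: "f S \<in> Pow {1..n}" if "S \<in> Pow {1..n}" for S by (rule bij_betw_apply[OF f that])
  define B where "B S T = (odd (prs (Mc E1) S T) \<noteq> odd (prs (Mc E2) (f S) (f T)))" for S T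
  have fin: "finite X" if "X \<in> Pow {1..n}" for X using that finite_subset by auto
  have bB: "bil n B" unfolding bil_def
  proof (intro ballI conjI)
    fix X Y T assume X: "X \<in> Pow {1..n}" and Y: "Y \<in> Pow {1..n}" and T: "T \<in> Pow {1..n}"
    have lXY: "f (sd X Y) = sd (f X) (f Y)" using lf X Y unfolding lin_def by auto
    show "B (sd X Y) T = (B X T \<noteq> B Y T)"
      unfolding B_def lXY prs_sd1[OF fin[OF X] fin[OF Y]] prs_sd1[OF fin[OF fP[OF X]] fin[OF fP[OF Y]]]
      by blast
    show "B T (sd X Y) = (B T X \<noteq> B T Y)"
      unfolding B_def lXY prs_sd2[OF fin[OF X] fin[OF Y] fin[OF T]]
        prs_sd2[OF fin[OF fP[OF X]] fin[OF fP[OF Y]] fin[OF fP[OF T]]]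
      by blast
  qed
  have sB: "\<forall>S\<in>Pow {1..n}. \<forall>T\<in>Pow {1..n}. B S T = B T S"
  proof (intro ballI)
    fix S T assume S: "S \<in> Pow {1..n}" and T: "T \<in> Pow {1..n}"
    have 1: "(odd (prs (Mc E1) S T) \<noteq> odd (prs (Mc E1) T S)) = cp E1 S T"
      using Mc_comm[OF E1] S T by auto
    have 2: "(odd (prs (Mc E2) (f S) (f T)) \<noteq> odd (prs (Mc E2) (f T) (f S))) = cp E2 (f S) (f T)"
      using Mc_comm[OF E2] fP[OF S] fP[OF T] by auto
    show "B S T = B T S" unfolding B_def using 1 2 c S T by auto
  qed
  obtain lam where lam: "\<forall>S\<in>Pow {1..n}. lam S \<noteq> (0::complex)"
    and lc: "\<forall>S\<in>Pow {1..n}. \<forall>T\<in>Pow {1..n}. (if B S T then -1 else 1) * lam (sd S T) = lam S * lam T"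
    using cobound[OF bB sB] by blast
  show ?thesis
  proof (rule iso_from_cocycle[OF f _ lam])
    show "\<forall>S\<in>Pow {1..n}. \<forall>T\<in>Pow {1..n}. f (sd S T) = sd (f S) (f T)" using lf unfolding lin_def .
    show "\<forall>S\<in>Pow {1..n}. \<forall>T\<in>Pow {1..n}.
       clif_sign E1 S T * lam (sd S T) = lam S * lam T * clif_sign E2 (f S) (f T)"
    proof (intro ballI)
      fix S T assume S: "S \<in> Pow {1..n}" and T: "T \<in> Pow {1..n}"
      have l: "(if B S T then -1 else 1) * lam (sd S T) = lam S * lam T" using lc S T by auto
      have l2: "lam (sd S T) = (if B S T then -1 else 1) * (lam S * lam T)"
      proof (cases "B S T")
        case True
        then have "- lam (sd S T) = lam S * lam T" using l by simp
        then have "lam (sd S T) = - (lam S * lam T)" by (metis minus_minus)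
        then show ?thesis using True by simp
      qed (use l in simp)
      show "clif_sign E1 S T * lam (sd S T) = lam S * lam T * clif_sign E2 (f S) (f T)"
        unfolding sign_prs[OF fin[OF S] fin[OF T]] sign_prs[OF fin[OF fP[OF S]] fin[OF fP[OF T]]]
        using l2 unfolding B_def by (auto simp: minus_one_power_iff split: if_splits)
    qed
  qed
qed



lemma cp_cong:
  assumes "\<And>i j. i \<in> {1..n} \<Longrightarrow> j \<in> {1..n} \<Longrightarrow> E1 i j = E2 i j" "S \<subseteq> {1..n}" "T \<subseteq> {1..n}"
  shows "cp E1 S T = cp E2 S T"
proof -
  have "prs E1 S T = prs E2 S T" by (rule prs_cong) (use assms in blast)
  then show ?thesis unfolding cp_def by simp
qed

lemma eqv_agree:
  assumes "\<And>i j. i \<in> {1..n} \<Longrightarrow> j \<in> {1..n} \<Longrightarrow> E1 i j = E2 i j"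
  shows "eqv n E1 E2"
  unfolding eqv_def
proof (intro exI[of _ id] conjI ballI)
  show "bij_betw id (Pow {1..n}) (Pow {1..n})" by (rule bij_betw_id)
  show "lin n id" unfolding lin_def by simp
  fix S T assume "S \<in> Pow {1..n}" "T \<in> Pow {1..n}"
  then show "cp E1 S T = cp E2 (id S) (id T)" using cp_cong[OF assms] by simp
qed

lemma eqv_sym:
  assumes "eqv n E1 E2" shows "eqv n E2 E1"
proof -
  let ?P = "Pow {1..n}"
  obtain f where f: "bij_betw f ?P ?P" and lf: "lin n f"
    and c: "\<forall>S\<in>?P. \<forall>T\<in>?P. cp E1 S T = cp E2 (f S) (f T)"
    using assms unfolding eqv_def by blast
  define h where "h = the_inv_into ?P f"
  have hb: "bij_betw h ?P ?P" unfolding h_def by (rule bij_betw_the_inv_into[OF f])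
  have fh: "f (h U) = U" if "U \<in> ?P" for U
    unfolding h_def using f_the_inv_into_f_bij_betw[OF f] that by blast
  have injf: "inj_on f ?P" using f by (simp add: bij_betw_def)
  have hP: "h U \<in> ?P" if "U \<in> ?P" for U by (rule bij_betw_apply[OF hb that])
  have lh: "lin n h" unfolding lin_def
  proof (intro ballI)
    fix S T assume S: "S \<in> ?P" and T: "T \<in> ?P"
    have sdP: "sd (h S) (h T) \<in> ?P" using hP[OF S] hP[OF T] sd_sub by auto
    have sdP2: "sd S T \<in> ?P" using S T sd_sub by auto
    have "f (sd (h S) (h T)) = sd (f (h S)) (f (h T))" using lf hP[OF S] hP[OF T] unfolding lin_def by blast
    also have "\<dots> = sd S T" using fh S T by simp
    also have "\<dots> = f (h (sd S T))" using fh[OF sdP2] by simp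
    finally show "h (sd S T) = sd (h S) (h T)"
      using inj_onD[OF injf _ sdP hP[OF sdP2]] by simp
  qed
  have cc: "\<forall>S\<in>?P. \<forall>T\<in>?P. cp E2 S T = cp E1 (h S) (h T)"
  proof (intro ballI)
    fix S T assume S: "S \<in> ?P" and T: "T \<in> ?P"
    have "cp E1 (h S) (h T) = cp E2 (f (h S)) (f (h T))" using c hP[OF S] hP[OF T] by blast
    then show "cp E2 S T = cp E1 (h S) (h T)" using fh[OF S] fh[OF T] by simp
  qed
  show ?thesis unfolding eqv_def by (intro exI[of _ h] conjI hb lh cc)
qed

lemma eqv_trans:
  assumes "eqv n E1 E2" "eqv n E2 E3" shows "eqv n E1 E3"
proof -
  let ?P = "Pow {1..n}"
  obtain f where f: "bij_betw f ?P ?P" and lf: "lin n f"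
    and c: "\<forall>S\<in>?P. \<forall>T\<in>?P. cp E1 S T = cp E2 (f S) (f T)"
    using assms(1) unfolding eqv_def by blast
  obtain g where g: "bij_betw g ?P ?P" and lg: "lin n g"
    and c2: "\<forall>S\<in>?P. \<forall>T\<in>?P. cp E2 S T = cp E3 (g S) (g T)"
    using assms(2) unfolding eqv_def by blast
  have fP: "f S \<in> ?P" if "S \<in> ?P" for S by (rule bij_betw_apply[OF f that])
  have b: "bij_betw (g \<circ> f) ?P ?P" using f g by (rule bij_betw_trans)
  have l: "lin n (g \<circ> f)" unfolding lin_def
  proof (intro ballI)
    fix S T assume S: "S \<in> ?P" and T: "T \<in> ?P"
    have "f (sd S T) = sd (f S) (f T)" using lf S T unfolding lin_def by blast
    moreover have "g (sd (f S) (f T)) = sd (g (f S)) (g (f T))" using lg fP[OF S] fP[OF T] unfolding lin_def by blast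
    ultimately show "(g \<circ> f) (sd S T) = sd ((g \<circ> f) S) ((g \<circ> f) T)" by simp
  qed
  have cc: "\<forall>S\<in>?P. \<forall>T\<in>?P. cp E1 S T = cp E3 ((g \<circ> f) S) ((g \<circ> f) T)"
  proof (intro ballI)
    fix S T assume S: "S \<in> ?P" and T: "T \<in> ?P"
    have "cp E1 S T = cp E2 (f S) (f T)" using c S T by blast
    also have "\<dots> = cp E3 (g (f S)) (g (f T))" using c2 fP[OF S] fP[OF T] by blast
    finally show "cp E1 S T = cp E3 ((g \<circ> f) S) ((g \<circ> f) T)" by simp
  qed
  show ?thesis unfolding eqv_def by (intro exI[of _ "g \<circ> f"] conjI b l cc)
qed

definition xs :: "(nat \<Rightarrow> nat set) \<Rightarrow> nat set \<Rightarrow> nat set" where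
  "xs g S = {x. odd (card {i\<in>S. x \<in> g i})}"

lemma card_filter_sum: "finite A \<Longrightarrow> card {i\<in>A. P i} = (\<Sum>i\<in>A. of_bool (P i) :: nat)"
  by (simp add: Collect_conj_eq Int_commute)

lemma xs_lin:
  assumes "finite S1" "finite S2"
  shows "xs g (sd S1 S2) = sd (xs g S1) (xs g S2)"
proof -
  have fsd: "finite (sd S1 S2)" using assms unfolding sd_def by auto
  have "odd (card {i\<in>sd S1 S2. x \<in> g i}) = (odd (card {i\<in>S1. x \<in> g i}) \<noteq> odd (card {i\<in>S2. x \<in> g i}))" for x
    unfolding card_filter_sum[OF fsd] card_filter_sum[OF assms(1)] card_filter_sum[OF assms(2)]
    by (rule odd_sd_sum[OF assms])
  then show ?thesis unfolding xs_def sd_def by auto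
qed

lemma xs_single: "xs g {i} = g i"
proof -
  have "{j\<in>{i}. x \<in> g j} = (if x \<in> g i then {i} else {})" for x by auto
  then show ?thesis unfolding xs_def by auto
qed

lemma xs_sub:
  assumes "\<And>i. i \<in> {1..n} \<Longrightarrow> g i \<subseteq> {1..n}" "S \<subseteq> {1..n}"
  shows "xs g S \<subseteq> {1..n}"
proof
  fix x assume "x \<in> xs g S"
  then have "card {i\<in>S. x \<in> g i} \<noteq> 0" unfolding xs_def by (metis (no_types, lifting) even_zero mem_Collect_eq)
  then obtain i where "i \<in> S" "x \<in> g i" by (metis (no_types, lifting) Collect_empty_eq card.empty)
  then show "x \<in> {1..n}" using assms by blast
qed

lemma cp_single: "cp E {a} {b} = E a b"
  unfolding cp_def prs_def by (cases "E a b") auto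

lemma move:
  assumes gs: "\<And>i. i \<in> {1..n} \<Longrightarrow> g i \<subseteq> {1..n}"
    and ker: "\<And>S. S \<subseteq> {1..n} \<Longrightarrow> xs g S = {} \<Longrightarrow> S = {}"
  shows "eqv n (\<lambda>i j. cp E (g i) (g j)) E"
proof -
  let ?P = "Pow {1..n}"
  let ?f = "xs g"
  have fin: "finite X" if "X \<in> ?P" for X using that finite_subset by auto
  have fP: "?f S \<in> ?P" if "S \<in> ?P" for S using xs_sub[OF gs] that by auto
  have lf: "lin n ?f" unfolding lin_def
  proof (intro ballI)
    fix S T assume S: "S \<in> ?P" and T: "T \<in> ?P"
    show "?f (sd S T) = sd (?f S) (?f T)" by (rule xs_lin[OF fin[OF S] fin[OF T]])
  qed
  have inj: "inj_on ?f ?P"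
  proof (rule inj_onI)
    fix S T assume S: "S \<in> ?P" and T: "T \<in> ?P" and e: "?f S = ?f T"
    have "?f (sd S T) = {}" using xs_lin[OF fin[OF S] fin[OF T]] e by simp
    then have "sd S T = {}" using ker[of "sd S T"] sd_sub S T by auto
    then show "S = T" unfolding sd_def by auto
  qed
  have img: "?f ` ?P = ?P" by (rule endo_inj_surj) (use fP inj in auto)
  have bij: "bij_betw ?f ?P ?P" unfolding bij_betw_def using inj img by blast
  define B where "B S T = cp E (?f S) (?f T)" for S T
  have bB: "bil n B" unfolding bil_def
  proof (intro ballI conjI)
    fix X Y T assume X: "X \<in> ?P" and Y: "Y \<in> ?P" and T: "T \<in> ?P"
    have lXY: "?f (sd X Y) = sd (?f X) (?f Y)" by (rule xs_lin[OF fin[OF X] fin[OF Y]])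
    show "B (sd X Y) T = (B X T \<noteq> B Y T)"
      unfolding B_def lXY cp_def by (rule prs_sd1[OF fin[OF fP[OF X]] fin[OF fP[OF Y]]])
    show "B T (sd X Y) = (B T X \<noteq> B T Y)"
      unfolding B_def lXY cp_def by (rule prs_sd2[OF fin[OF fP[OF X]] fin[OF fP[OF Y]] fin[OF fP[OF T]]])
  qed
  have cc: "\<forall>S\<in>?P. \<forall>T\<in>?P. cp (\<lambda>i j. cp E (g i) (g j)) S T = cp E (?f S) (?f T)"
  proof (intro ballI)
    fix S T assume S: "S \<in> ?P" and T: "T \<in> ?P"
    have "cp E (?f S) (?f T) = B S T" unfolding B_def ..
    also have "\<dots> = odd (prs (\<lambda>i j. B {i} {j}) S T)" using bil_expand[OF bB] S T by auto
    also have "\<dots> = cp (\<lambda>i j. cp E (g i) (g j)) S T" unfolding B_def xs_single cp_def ..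
    finally show "cp (\<lambda>i j. cp E (g i) (g j)) S T = cp E (?f S) (?f T)" by simp
  qed
  show ?thesis unfolding eqv_def by (intro exI[of _ ?f] conjI bij lf cc)
qed

lemma perm_move:
  assumes inj: "inj_on \<pi> {1..n}" and im: "\<pi> ` {1..n} \<subseteq> {1..n}"
  shows "eqv n (\<lambda>i j. E (\<pi> i) (\<pi> j)) E"
proof -
  have "eqv n (\<lambda>i j. cp E ({\<pi> i}) ({\<pi> j})) E"
  proof (rule move)
    show "{\<pi> i} \<subseteq> {1..n}" if "i \<in> {1..n}" for i using im that by blast
    fix S assume S: "S \<subseteq> {1..n}" and e: "xs (\<lambda>i. {\<pi> i}) S = {}"
    show "S = {}"
    proof (rule ccontr)
      assume "S \<noteq> {}"
      then obtain i where i: "i \<in> S" by auto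
      have "{j\<in>S. \<pi> i \<in> {\<pi> j}} = {i}" using inj S i by (auto dest: inj_onD)
      then have "\<pi> i \<in> xs (\<lambda>i. {\<pi> i}) S" unfolding xs_def by simp
      then show False using e by simp
    qed
  qed
  then show ?thesis unfolding cp_single .
qed

lemma cp_sym:
  assumes E: "simple_graph n E" "A \<subseteq> {1..n}" "B \<subseteq> {1..n}"
  shows "cp E A B = cp E B A"
proof -
  have "prs E B A = prs (\<lambda>i j. E j i) A B" by (rule prs_swap)
  also have "\<dots> = prs E A B"
    by (rule prs_cong) (use E in \<open>auto simp: simple_graph_def\<close>)
  finally show ?thesis unfolding cp_def by simp
qed

lemma cp_diag:
  assumes E: "simple_graph n E" "A \<subseteq> {1..n}"
  shows "\<not> cp E A A"
proof -
  have pw: "(of_bool (E i j) :: nat) = of_bool (i < j \<and> E i j) + of_bool (j < i \<and> E i j)"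
    if "i \<in> A" "j \<in> A" for i j
  proof -
    have "\<not> E i i" using E that unfolding simple_graph_def by auto
    then show ?thesis by (cases "i < j"; cases "j < i") auto
  qed
  have "prs E A A = prs (\<lambda>i j. i < j \<and> E i j) A A + prs (\<lambda>i j. j < i \<and> E i j) A A"
    unfolding prs_def using pw by (simp only: sum.distrib[symmetric]) (intro sum.cong refl, auto)
  also have "prs (\<lambda>i j. j < i \<and> E i j) A A = prs (\<lambda>i j. i < j \<and> E j i) A A"
    by (rule prs_swap)
  also have "\<dots> = prs (\<lambda>i j. i < j \<and> E i j) A A"
    by (rule prs_cong) (use E in \<open>auto simp: simple_graph_def\<close>)
  finally show ?thesis unfolding cp_def by simp
qed

lemma simple_move:
  assumes E: "simple_graph n E" and gs: "\<And>i. i \<in> {1..n} \<Longrightarrow> g i \<subseteq> {1..n}"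
  shows "simple_graph n (\<lambda>i j. cp E (g i) (g j))"
  unfolding simple_graph_def using cp_sym[OF E] cp_diag[OF E] gs by auto



definition H :: "nat \<Rightarrow> nat \<Rightarrow> nat \<Rightarrow> bool" where
  "H m i j = (i \<le> 2 * m \<and> j \<le> 2 * m \<and> i \<noteq> j \<and> (i + 1) div 2 = (j + 1) div 2)"

definition partner :: "nat \<Rightarrow> nat" where
  "partner i = (if odd i then i + 1 else i - 1)"

lemma div2_iff: "((k + 1) div 2 = (s::nat)) = (2 * s \<le> k + 1 \<and> k + 1 < 2 * s + 2)"
  by linarith

lemma H_partner:
  assumes "1 \<le> i" "i \<le> 2 * m" "1 \<le> k"
  shows "H m k (partner i) = (k = i)" "1 \<le> partner i" "partner i \<le> 2 * m"
proof -
  have "(H m k (partner i) = (k = i)) \<and> 1 \<le> partner i \<and> partner i \<le> 2 * m"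
  proof (cases "odd i")
    case True
    then obtain t where t: "i = 2 * t + 1" by (metis oddE)
    have p: "partner i = 2 * t + 2" unfolding partner_def using True t by simp
    have d: "(2 * t + 2 + 1) div 2 = t + 1" by simp
    have tm: "2 * t + 2 \<le> 2 * m" using assms(2) t by presburger
    show ?thesis unfolding H_def p d div2_iff using assms t tm by auto
  next
    case False
    then obtain t where t: "i = 2 * t" by (metis evenE)
    have t1: "1 \<le> t" using assms t by simp
    have p: "partner i = 2 * t - 1" unfolding partner_def using False t by simp
    have d: "(2 * t - 1 + 1) div 2 = t" using t1 by simp
    show ?thesis unfolding H_def p d div2_iff using assms t t1 by auto
  qed
  then show "H m k (partner i) = (k = i)" "1 \<le> partner i" "partner i \<le> 2 * m" by auto
qed

lemma rad_eqv:
  assumes "eqv n E1 E2"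
  shows "card (rad n E1) = card (rad n E2)"
proof -
  let ?P = "Pow {1..n}"
  obtain f where f: "bij_betw f ?P ?P" and lf: "lin n f"
    and c: "\<forall>S\<in>?P. \<forall>T\<in>?P. cp E1 S T = cp E2 (f S) (f T)"
    using assms unfolding eqv_def by blast
  have fP: "f S \<in> ?P" if "S \<in> ?P" for S by (rule bij_betw_apply[OF f that])
  have injf: "inj_on f ?P" using f by (simp add: bij_betw_def)
  have imf: "f ` ?P = ?P" using f by (simp add: bij_betw_def)
  have r1: "rad n E1 \<subseteq> ?P" unfolding rad_def by auto
  have "bij_betw f (rad n E1) (rad n E2)" unfolding bij_betw_def
  proof
    show "inj_on f (rad n E1)" using injf r1 by (rule inj_on_subset)
    show "f ` rad n E1 = rad n E2"
    proof
      show "f ` rad n E1 \<subseteq> rad n E2"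
      proof
        fix U assume "U \<in> f ` rad n E1"
        then obtain S where S: "S \<in> rad n E1" and U: "U = f S" by auto
        have SP: "S \<in> ?P" using S r1 by auto
        have "\<not> cp E2 U T'" if T': "T' \<subseteq> {1..n}" for T'
        proof -
          have "T' \<in> f ` ?P" using imf T' by auto
          then obtain T where T: "T \<in> ?P" and "T' = f T" by auto
          then have "cp E2 U T' = cp E1 S T" using c SP U by auto
          then show ?thesis using S T unfolding rad_def by auto
        qed
        then show "U \<in> rad n E2" unfolding rad_def using fP[OF SP] U by auto
      qed
      show "rad n E2 \<subseteq> f ` rad n E1"
      proof
        fix U assume U: "U \<in> rad n E2"
        then have "U \<in> f ` ?P" using imf unfolding rad_def by auto
        then obtain S where S: "S \<in> ?P" and US: "U = f S" by auto
        have "\<not> cp E1 S T" if T: "T \<subseteq> {1..n}" for T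
        proof -
          have "cp E1 S T = cp E2 U (f T)" using c S T US by auto
          then show ?thesis using U fP[of T] T unfolding rad_def by auto
        qed
        then have "S \<in> rad n E1" unfolding rad_def using S by auto
        then show "U \<in> f ` rad n E1" using US by auto
      qed
    qed
  qed
  then show ?thesis by (rule bij_betw_same_card)
qed

lemma rad_H:
  assumes m: "2 * m \<le> n"
  shows "rad n (H m) = Pow {2 * m + 1..n}"
proof
  show "rad n (H m) \<subseteq> Pow {2 * m + 1..n}"
  proof
    fix S assume S: "S \<in> rad n (H m)"
    then have Sn: "S \<subseteq> {1..n}" unfolding rad_def by auto
    have "i > 2 * m" if i: "i \<in> S" for i
    proof (rule ccontr)
      assume "\<not> i > 2 * m"
      then have i2: "i \<le> 2 * m" by simp
      have i1: "1 \<le> i" using Sn i by auto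
      have pn: "{partner i} \<subseteq> {1..n}" using H_partner(2,3)[OF i1 i2 i1] m by auto
      have fS: "finite S" using Sn finite_subset by auto
      have "prs (H m) S {partner i} = (\<Sum>k\<in>S. of_bool (H m k (partner i)))"
        unfolding prs_def by (simp del: sum_of_bool_eq)
      also have "\<dots> = card {k\<in>S. H m k (partner i)}"
        unfolding card_filter_sum[OF fS] ..
      also have "{k\<in>S. H m k (partner i)} = {i}"
        using H_partner(1)[OF i1 i2] Sn i by auto
      finally have "cp (H m) S {partner i}" unfolding cp_def by simp
      then show False using S pn unfolding rad_def by auto
    qed
    then show "S \<in> Pow {2 * m + 1..n}" using Sn by (auto simp: subset_iff Suc_le_eq)
  qed
  show "Pow {2 * m + 1..n} \<subseteq> rad n (H m)"
  proof
    fix S assume S: "S \<in> Pow {2 * m + 1..n}"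
    have "prs (H m) S T = 0" for T
    proof -
      have "prs (H m) S T = prs (\<lambda>i j. False) S T"
        by (rule prs_cong) (use S in \<open>auto simp: H_def\<close>)
      then show ?thesis unfolding prs_def by simp
    qed
    then show "S \<in> rad n (H m)" unfolding rad_def cp_def using S by auto
  qed
qed

lemma card_rad_H:
  assumes "2 * m \<le> n"
  shows "card (rad n (H m)) = 2 ^ (n - 2 * m)"
  unfolding rad_H[OF assms] by (simp add: card_Pow)



definition tr :: "nat \<Rightarrow> nat \<Rightarrow> nat \<Rightarrow> nat" where
  "tr a b x = (if x = a then b else if x = b then a else x)"

lemma tr_tr: "tr a b (tr a b x) = x" unfolding tr_def by auto
lemma tr_inj: "inj (tr a b)" by (metis injI tr_tr)

definition Inv :: "nat \<Rightarrow> nat \<Rightarrow> (nat \<Rightarrow> nat \<Rightarrow> bool) \<Rightarrow> bool" where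
  "Inv n r E \<longleftrightarrow> simple_graph n E \<and> 2 * r \<le> n \<and>
     (\<forall>i\<in>{1..n}. \<forall>j\<in>{1..n}. (i \<le> 2 * r \<or> j \<le> 2 * r) \<longrightarrow> E i j = H r i j)"

lemma H_sym: "H m i j = H m j i" unfolding H_def by auto

lemma H_step:
  assumes "i \<le> 2 * r \<or> j \<le> 2 * r" "i \<le> 2 * r + 2" "j \<le> 2 * r + 2"
  shows "H r i j = H (Suc r) i j"
proof -
  have "(i + 1) div 2 \<noteq> (j + 1) div 2" if "i \<le> 2 * r" "2 * r < j" for i j :: nat
  proof -
    have "(i + 1) div 2 \<le> r" using that by linarith
    moreover have "(j + 1) div 2 \<ge> r + 1" using that by linarith
    ultimately show ?thesis by simp
  qed
  note ne = this
  show ?thesis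
  proof (cases "i \<le> 2 * r \<and> j \<le> 2 * r")
    case True then show ?thesis unfolding H_def by auto
  next
    case False
    then have "(i \<le> 2 * r \<and> 2 * r < j) \<or> (j \<le> 2 * r \<and> 2 * r < i)" using assms(1) by auto
    then have "(i + 1) div 2 \<noteq> (j + 1) div 2" using ne[of i j] ne[of j i] by auto
    then show ?thesis unfolding H_def by simp
  qed
qed

lemma H_big: "2 * r < i \<Longrightarrow> \<not> H r i j" "2 * r < j \<Longrightarrow> \<not> H r i j"
  unfolding H_def by auto

lemma prs_single: "prs P {a} {b} = of_bool (P a b)"
  unfolding prs_def by (simp del: sum_of_bool_eq)

lemma prs_empty: "prs P {} T = 0" unfolding prs_def by simp

lemma prs_opt: "prs P (if c then {a} else {}) {b} = of_bool (c \<and> P a b)"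
  by (cases c) (simp_all add: prs_single prs_empty)

lemma perm_step:
  assumes I: "Inv n r E" and a: "a \<in> {1..n}" "2 * r < a" and b: "b \<in> {1..n}" "2 * r < b" and ab: "a \<noteq> b" and Eab: "E a b"
  defines "p \<equiv> 2 * r + 1" and "q \<equiv> 2 * r + 2"
  shows "\<exists>E1. eqv n E1 E \<and> Inv n r E1 \<and> E1 p q"
proof -
  define b' where "b' = tr p a b"
  define \<pi> where "\<pi> x = tr p a (tr q b' x)" for x
  have qn: "q \<le> n" using a b ab unfolding q_def by auto
  have b'g: "2 * r < b'" "b' \<in> {1..n}" unfolding b'_def tr_def p_def using a b by auto
  have pa: "p \<in> {1..n}" "q \<in> {1..n}" using qn unfolding p_def q_def by auto
  have inj: "inj_on \<pi> {1..n}" unfolding \<pi>_def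
    by (rule inj_on_subset[of _ UNIV]) (auto simp: inj_def, metis tr_tr)
  have trn: "tr u v x \<in> {1..n}" if "u \<in> {1..n}" "v \<in> {1..n}" "x \<in> {1..n}" for u v x
    using that unfolding tr_def by auto
  have im: "\<pi> ` {1..n} \<subseteq> {1..n}" unfolding \<pi>_def using trn pa a b'g by auto
  have fx: "\<pi> x = x" if "x \<le> 2 * r" for x
    using that a b'g unfolding \<pi>_def tr_def p_def q_def by auto
  have big: "2 * r < \<pi> x" if "2 * r < x" for x
    using that a b'g unfolding \<pi>_def tr_def p_def q_def by auto
  have pp: "\<pi> p = a"
  proof -
    have "b' \<noteq> p" unfolding b'_def tr_def using ab a unfolding p_def by auto
    then show ?thesis unfolding \<pi>_def tr_def q_def p_def by auto
  qed
  have pq: "\<pi> q = b" unfolding \<pi>_def b'_def using tr_tr[of p a b] unfolding tr_def by auto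
  define E1 where "E1 i j = E (\<pi> i) (\<pi> j)" for i j
  have e: "eqv n E1 E" unfolding E1_def by (rule perm_move[OF inj im])
  have sg: "simple_graph n E" "2 * r \<le> n"
    and ih: "\<And>i j. i \<in> {1..n} \<Longrightarrow> j \<in> {1..n} \<Longrightarrow> i \<le> 2 * r \<or> j \<le> 2 * r \<Longrightarrow> E i j = H r i j"
    using I unfolding Inv_def by auto
  have pin: "\<pi> x \<in> {1..n}" if "x \<in> {1..n}" for x using im that by blast
  have s1: "simple_graph n E1" using sg(1) pin unfolding simple_graph_def E1_def by auto
  have hr: "H r (\<pi> i) (\<pi> j) = H r i j" if "i \<le> 2 * r \<or> j \<le> 2 * r" for i j
  proof (cases "i \<le> 2 * r")
    case True
    show ?thesis
    proof (cases "j \<le> 2 * r")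
      case True2: True then show ?thesis using True fx by simp
    next
      case False then show ?thesis using True fx big H_big by simp
    qed
  next
    case False
    then have "j \<le> 2 * r" using that by simp
    then show ?thesis using False fx big H_big by simp
  qed
  have inv1: "Inv n r E1" unfolding Inv_def
  proof (intro conjI s1 sg(2) ballI impI)
    fix i j assume i: "i \<in> {1..n}" and j: "j \<in> {1..n}" and c: "i \<le> 2 * r \<or> j \<le> 2 * r"
    have c': "\<pi> i \<le> 2 * r \<or> \<pi> j \<le> 2 * r" using c fx by auto
    show "E1 i j = H r i j" unfolding E1_def using ih[OF pin[OF i] pin[OF j] c'] hr[OF c] by simp
  qed
  have "E1 p q" unfolding E1_def pp pq using Eab .
  then show ?thesis using e inv1 by blast
qed

lemma odd3: "odd (of_bool A + of_bool B + of_bool C :: nat) = ((A \<noteq> B) \<noteq> C)"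
  by (cases A; cases B; cases C) auto

lemma clean_step:
  assumes I: "Inv n r E" and Epq: "E (2 * r + 1) (2 * r + 2)" and qn: "2 * r + 2 \<le> n"
  shows "\<exists>E2. eqv n E2 E \<and> Inv n (Suc r) E2"
proof -
  define p where "p = 2 * r + 1"
  define q where "q = 2 * r + 2"
  have sg: "simple_graph n E" "2 * r \<le> n"
    and ih: "\<And>i j. i \<in> {1..n} \<Longrightarrow> j \<in> {1..n} \<Longrightarrow> i \<le> 2 * r \<or> j \<le> 2 * r \<Longrightarrow> E i j = H r i j"
    using I unfolding Inv_def by auto
  have sym: "E i j = E j i" if "i \<in> {1..n}" "j \<in> {1..n}" for i j
    using sg(1) that unfolding simple_graph_def by auto
  have irr: "\<not> E i i" if "i \<in> {1..n}" for i using sg(1) that unfolding simple_graph_def by auto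
  have pq: "p \<in> {1..n}" "q \<in> {1..n}" using qn unfolding p_def q_def by auto
  have Epq': "E p q" "E q p" using Epq sym pq unfolding p_def q_def by auto
  define Xq where "Xq k = (if E k p then {q} else {})" for k
  define Xp where "Xp k = (if E k q then {p} else {})" for k
  define g where "g k = (if q < k then {k} \<union> Xq k \<union> Xp k else {k})" for k
  have gs: "g i \<subseteq> {1..n}" if "i \<in> {1..n}" for i
    using that pq unfolding g_def Xq_def Xp_def by auto
  have gsmall: "g k = {k}" if "k \<le> q" for k using that unfolding g_def by auto
  have Xsub: "Xq k \<union> Xp k \<subseteq> {p, q}" for k unfolding Xq_def Xp_def by auto
  have mem_g: "(k \<in> g i) = (k = i)" if "q < k" for i k
    using that Xsub[of i] unfolding g_def p_def q_def by auto
  have ker: "S = {}" if S: "S \<subseteq> {1..n}" and e: "xs g S = {}" for S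
  proof -
    have one: "k \<notin> S" if "{i\<in>S. k \<in> g i} = {k}" for k
    proof
      assume "k \<in> S"
      then have "k \<in> xs g S" unfolding xs_def using that by simp
      then show False using e by simp
    qed
    have small: "k \<le> q" if "k \<in> S" for k
    proof (rule ccontr)
      assume "\<not> k \<le> q"
      then have "{i\<in>S. k \<in> g i} = {k}" using mem_g[of k] that by auto
      then show False using one that by blast
    qed
    show "S = {}"
    proof (rule ccontr)
      assume "S \<noteq> {}"
      then obtain k where k: "k \<in> S" by auto
      have "{i\<in>S. k \<in> g i} = {k}" using small gsmall k by auto
      then show False using one k by blast
    qed
  qed
  define E2 where "E2 i j = cp E (g i) (g j)" for i j
  have e: "eqv n E2 E" unfolding E2_def by (rule move[OF gs ker])
  have s2: "simple_graph n E2" unfolding E2_def by (rule simple_move[OF sg(1) gs])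
  have fin: "finite (Xq k)" "finite (Xp k)" for k unfolding Xq_def Xp_def by auto
  have formula: "E2 k j = ((E k j \<noteq> (E k p \<and> E q j)) \<noteq> (E k q \<and> E p j))"
    if k: "q < k" and j: "j \<le> q" for k j
  proof -
    have d1: "{k} \<inter> Xq k = {}" "({k} \<union> Xq k) \<inter> Xp k = {}"
      using k unfolding Xq_def Xp_def p_def q_def by auto
    have gk: "g k = ({k} \<union> Xq k) \<union> Xp k" using k unfolding g_def by simp
    have "prs E (g k) {j} = prs E ({k} \<union> Xq k) {j} + prs E (Xp k) {j}"
      unfolding gk by (rule prs_union1) (use fin d1 in auto)
    also have "prs E ({k} \<union> Xq k) {j} = prs E {k} {j} + prs E (Xq k) {j}"
      by (rule prs_union1) (use fin d1 in auto)
    finally have "prs E (g k) {j} = prs E {k} {j} + prs E (Xq k) {j} + prs E (Xp k) {j}" .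
    also have "\<dots> = of_bool (E k j) + of_bool (E k p \<and> E q j) + of_bool (E k q \<and> E p j)"
      unfolding Xq_def Xp_def prs_opt prs_single ..
    finally show ?thesis unfolding E2_def cp_def gsmall[OF j] using odd3 by simp
  qed
  have claim: "E2 i j = H (Suc r) i j" if i: "i \<in> {1..n}" and j: "j \<in> {1..n}" and jq: "j \<le> q" for i j
  proof (cases "i \<le> q")
    case True
    have "E2 i j = E i j" unfolding E2_def gsmall[OF True] gsmall[OF jq] cp_single ..
    also have "\<dots> = H (Suc r) i j"
    proof (cases "i \<le> 2 * r \<or> j \<le> 2 * r")
      case True2: True
      then show ?thesis using ih[OF i j True2] H_step[OF True2] True jq unfolding q_def by simp
    next
      case False
      then have "i \<in> {p, q}" "j \<in> {p, q}" using True jq unfolding p_def q_def by auto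
      then show ?thesis using Epq' irr i unfolding H_def p_def q_def by auto
    qed
    finally show ?thesis .
  next
    case False
    then have k: "q < i" by simp
    have H0: "\<not> H (Suc r) i j" using k unfolding H_def q_def by auto
    have Ep0: "\<not> E p j" "\<not> E q j" "\<not> E i j" if "j \<le> 2 * r"
      using ih[OF pq(1) j] ih[OF pq(2) j] ih[OF i j] that H_big[of r p j] H_big[of r q j] H_big[of r i j] k
      unfolding p_def q_def by auto
    show ?thesis
    proof (cases "j \<le> 2 * r")
      case True then show ?thesis using formula[OF k jq] Ep0 H0 by simp
    next
      case False
      then have "j = p \<or> j = q" using jq unfolding p_def q_def by auto
      then show ?thesis using formula[OF k jq] H0 Epq' irr pq by auto
    qed
  qed
  have inv2: "Inv n (Suc r) E2" unfolding Inv_def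
  proof (intro conjI s2 ballI impI)
    show "2 * Suc r \<le> n" using qn by simp
    fix i j assume i: "i \<in> {1..n}" and j: "j \<in> {1..n}" and c: "i \<le> 2 * Suc r \<or> j \<le> 2 * Suc r"
    show "E2 i j = H (Suc r) i j"
    proof (cases "j \<le> q")
      case True then show ?thesis using claim i j by blast
    next
      case False
      then have iq: "i \<le> q" using c unfolding q_def by auto
      have "E2 i j = E2 j i" using s2 i j unfolding simple_graph_def by auto
      also have "\<dots> = H (Suc r) j i" using claim[OF j i iq] .
      finally show ?thesis using H_sym by simp
    qed
  qed
  show ?thesis using e inv2 by blast
qed

lemma reduce_inv:
  assumes "Inv n r E"
  shows "\<exists>m. 2 * m \<le> n \<and> eqv n E (H m)"
  using assms
proof (induction "n - 2 * r" arbitrary: r E rule: less_induct)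
  case less
  have sg: "simple_graph n E" "2 * r \<le> n"
    and ih: "\<And>i j. i \<in> {1..n} \<Longrightarrow> j \<in> {1..n} \<Longrightarrow> i \<le> 2 * r \<or> j \<le> 2 * r \<Longrightarrow> E i j = H r i j"
    using less.prems unfolding Inv_def by auto
  show ?case
  proof (cases "\<exists>a\<in>{1..n}. \<exists>b\<in>{1..n}. 2 * r < a \<and> 2 * r < b \<and> E a b")
    case False
    have "E i j = H r i j" if "i \<in> {1..n}" "j \<in> {1..n}" for i j
    proof (cases "i \<le> 2 * r \<or> j \<le> 2 * r")
      case True then show ?thesis using ih that by blast
    next
      case c: False
      then show ?thesis using False that H_big[of r i j] by auto
    qed
    then have "eqv n E (H r)" by (rule eqv_agree)
    then show ?thesis using sg(2) by blast
  next
    case True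
    then obtain a b where a: "a \<in> {1..n}" "2 * r < a" and b: "b \<in> {1..n}" "2 * r < b" and Eab: "E a b"
      by blast
    have ab: "a \<noteq> b" using Eab sg(1) a unfolding simple_graph_def by auto
    have qn: "2 * r + 2 \<le> n" using a b ab by auto
    obtain E1 where e1: "eqv n E1 E" and i1: "Inv n r E1" and p1: "E1 (2 * r + 1) (2 * r + 2)"
      using perm_step[OF less.prems a b ab Eab] by blast
    obtain E2 where e2: "eqv n E2 E1" and i2: "Inv n (Suc r) E2"
      using clean_step[OF i1 p1 qn] by blast
    have "n - 2 * Suc r < n - 2 * r" using qn by simp
    then obtain m where m: "2 * m \<le> n" "eqv n E2 (H m)" using less.hyps i2 by blast
    have "eqv n E E2" using eqv_trans[OF e2 e1] by (rule eqv_sym)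
    then have "eqv n E (H m)" using m(2) by (rule eqv_trans)
    then show ?thesis using m(1) by blast
  qed
qed

lemma reduce2:
  assumes "simple_graph n E"
  shows "\<exists>m. 2 * m \<le> n \<and> eqv n E (H m)"
proof (rule reduce_inv)
  show "Inv n 0 E" unfolding Inv_def using assms by (auto simp: H_def)
qed

theorem mainTheorem1:
  fixes n :: nat and E1 E2 :: "nat \<Rightarrow> nat \<Rightarrow> bool"
  assumes "n \<ge> 1"
    and "simple_graph n E1" and "simple_graph n E2"
    and "clif_center_dim n E1 = clif_center_dim n E2"
  shows "clif_iso n E1 E2"
proof -
  obtain m1 where m1: "2 * m1 \<le> n" "eqv n E1 (H m1)" using reduce2[OF assms(2)] by blast
  obtain m2 where m2: "2 * m2 \<le> n" "eqv n E2 (H m2)" using reduce2[OF assms(3)] by blast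
  have "card (rad n E1) = card (rad n E2)"
    using assms(4) center_dim[OF assms(2)] center_dim[OF assms(3)] by simp
  then have "(2::nat) ^ (n - 2 * m1) = 2 ^ (n - 2 * m2)"
    using rad_eqv[OF m1(2)] rad_eqv[OF m2(2)] card_rad_H[OF m1(1)] card_rad_H[OF m2(1)] by simp
  then have "n - 2 * m1 = n - 2 * m2" by simp
  then have "m1 = m2" using m1(1) m2(1) by simp
  then have "eqv n (H m1) E2" using eqv_sym[OF m2(2)] by simp
  then have "eqv n E1 E2" by (rule eqv_trans[OF m1(2)])
  then show ?thesis by (rule eqv_iso[OF assms(2,3)])
qed

end
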